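(* Let $n\ge 1$, let $f,g:\mathbb{R}^n\to\mathbb{R}$ be continuously differentiable with $f(\mathbf 0)=0$ and $g(\mathbf x)\neq 0$ for all $\mathbf x\in\mathbb{R}^n$, and consider the control system $\dot{\mathbf x}=\mathbf f(\mathbf x)+\mathbf g(\mathbf x)u$ with $\mathbf f(\mathbf x)=A_0\mathbf x+e_n f(\mathbf x)$, $\mathbf g(\mathbf x)=e_n g(\mathbf x)$ (notation in context). Let $N\in\mathbb{N}$, $T>0$, $\underline t\ge 0$, $\overline t=\underline t+NT$, $t_k=\underline t+kT$, and let $\mathbf x_0,\dots,\mathbf x_N\in\mathbb{R}^n$. For $k=0,\dots,N-1$ let $r_k:[0,T]\to\mathbb{R}$ be the unique Bézier curve of order $2n-1$ with $r_k^{(j-1)}(0)=x_k^j$ and $r_k^{(j-1)}(T)=x_{k+1}^j$ for $j=1,\dots,n$ (where $\mathbf x_k=(x_k^1,\dots,x_k^n)^\top$), and let $\mathbf r_k(\tau)=(r_k(\tau),r_k^{(1)}(\tau),\dots,r_k^{(n-1)}(\tau))^\top$. Then the function $\mathbf x_d:[\underline t,\overline t]\to\mathbb{R}^n$ defined by $\mathbf x_d(t)=\mathbf r_k(t-t_k)$ for $t\in[t_k,t_{k+1})$, $k=0,\dots,N-1$, and $\mathbf x_d(\overline t)=\mathbf x_N$, is a dynamically admissible trajectory for this system.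
   Context: $A_0\in\mathbb{R}^{n\times n}$ is the matrix $\begin{bmatrix}\mathbf 0&I\\0&\mathbf 0^\top\end{bmatrix}$ (ones on the superdiagonal, zeros elsewhere), and $e_n$ is the last standard basis vector of $\mathbb{R}^n$. A Bézier curve of order $p$ on $[0,T]$ is $r(\tau)=\boldsymbol\xi^\top\mathbf z(\tau)=\sum_{i=0}^p\xi_i z_i(\tau)$ with control points $\xi_i\in\mathbb{R}$ and Bernstein polynomials $z_i(\tau)=\binom{p}{i}(\tau/T)^i(1-\tau/T)^{p-i}$. (For order $2n-1$, the $2n$ boundary conditions above determine the control points uniquely.) A piecewise continuously differentiable function $\mathbf x_d:[\underline t,\overline t]\to\mathbb{R}^n$ (continuous, with derivative on the open intervals of a finite partition having one-sided limits) is a dynamically admissible trajectory if there is a piecewise continuous $u_d:[\underline t,\overline t]\to\mathbb{R}$ with $\dot{\mathbf x}_d(t)=\mathbf f(\mathbf x_d(t))+\mathbf g(\mathbf x_d(t))u_d(t)$ for almost all $t\in[\underline t,\overline t]$. *)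

theory Defs
  imports "HOL-Analysis.Analysis"
begin

text \<open>Coordinates of R^n are indexed by a finite linearly ordered type 'n;
  the coordinate i is the (pos i + 1)-th coordinate, pos i in {0..n-1}.\<close>

definition pos :: "'n::{finite,linorder} \<Rightarrow> nat" where
  "pos i = card {j. j < i}"

text \<open>A_0 (ones on the superdiagonal): (A_0 x)_j = x_(j+1) for j < n, and 0 for j = n.\<close>
definition A0 :: "(real,'n::{finite,linorder}) vec \<Rightarrow> (real,'n) vec" where
  "A0 x = (\<chi> i. if (\<exists>j. i < j) then x $ (LEAST j. i < j) else 0)"

definition e_last :: "(real,'n::{finite,linorder}) vec" where
  "e_last = (\<chi> i. if (\<forall>j. j \<le> i) then 1 else 0)"

definition sys_f :: "((real,'n::{finite,linorder}) vec \<Rightarrow> real) \<Rightarrow> (real,'n) vec \<Rightarrow> (real,'n) vec" where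
  "sys_f f x = A0 x + f x *\<^sub>R e_last"

definition sys_g :: "((real,'n::{finite,linorder}) vec \<Rightarrow> real) \<Rightarrow> (real,'n) vec \<Rightarrow> (real,'n) vec" where
  "sys_g g x = g x *\<^sub>R e_last"

definition C1_fun :: "((real,'n::finite) vec \<Rightarrow> real) \<Rightarrow> bool" where
  "C1_fun f \<longleftrightarrow> (\<exists>f' :: (real,'n) vec \<Rightarrow> ((real,'n) vec \<Rightarrow>\<^sub>L real).
      (\<forall>x. (f has_derivative blinfun_apply (f' x)) (at x)) \<and> continuous_on UNIV f')"

definition bernstein :: "real \<Rightarrow> nat \<Rightarrow> nat \<Rightarrow> real \<Rightarrow> real" where
  "bernstein T p i \<tau> = real (p choose i) * (\<tau> / T) ^ i * (1 - \<tau> / T) ^ (p - i)"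

definition bezier :: "real \<Rightarrow> nat \<Rightarrow> (nat \<Rightarrow> real) \<Rightarrow> real \<Rightarrow> real" where
  "bezier T p \<xi> \<tau> = (\<Sum>i\<le>p. \<xi> i * bernstein T p i \<tau>)"

text \<open>Piecewise continuously differentiable on [a,b]: continuous, and there is a finite
  partition such that on each open subinterval the function has a derivative that extends
  continuously to the closed subinterval (i.e. has one-sided limits).\<close>
definition partition_of :: "real set \<Rightarrow> real \<Rightarrow> real \<Rightarrow> bool" where
  "partition_of P a b \<longleftrightarrow> finite P \<and> P \<subseteq> {a..b} \<and> a \<in> P \<and> b \<in> P"

definition adjacent :: "real set \<Rightarrow> real \<Rightarrow> real \<Rightarrow> bool" where
  "adjacent P s s' \<longleftrightarrow> s \<in> P \<and> s' \<in> P \<and> s < s' \<and> {s<..<s'} \<inter> P = {}"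

definition piecewise_C1 :: "(real \<Rightarrow> 'a::real_normed_vector) \<Rightarrow> real \<Rightarrow> real \<Rightarrow> bool" where
  "piecewise_C1 x a b \<longleftrightarrow> continuous_on {a..b} x \<and>
     (\<exists>P. partition_of P a b \<and> (\<forall>s s'. adjacent P s s' \<longrightarrow>
        (\<exists>D. continuous_on {s..s'} D \<and> (\<forall>t\<in>{s<..<s'}. (x has_vector_derivative D t) (at t)))))"

definition piecewise_cont :: "(real \<Rightarrow> 'a::real_normed_vector) \<Rightarrow> real \<Rightarrow> real \<Rightarrow> bool" where
  "piecewise_cont u a b \<longleftrightarrow>
     (\<exists>P. partition_of P a b \<and> (\<forall>s s'. adjacent P s s' \<longrightarrow>
        (\<exists>D. continuous_on {s..s'} D \<and> (\<forall>t\<in>{s<..<s'}. u t = D t))))"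

definition dyn_admissible ::
  "('v::real_normed_vector \<Rightarrow> 'v) \<Rightarrow> ('v \<Rightarrow> 'v) \<Rightarrow> (real \<Rightarrow> 'v) \<Rightarrow> real \<Rightarrow> real \<Rightarrow> bool" where
  "dyn_admissible F G xd a b \<longleftrightarrow> piecewise_C1 xd a b \<and>
     (\<exists>ud :: real \<Rightarrow> real. piecewise_cont ud a b \<and>
        (AE t in lborel. t \<in> {a..b} \<longrightarrow>
           (xd has_vector_derivative (F (xd t) + ud t *\<^sub>R G (xd t))) (at t)))"

end

theory Submission
  imports Defs "HOL-Computational_Algebra.Polynomial"
begin

lemma bezier_poly: "\<exists>P. bezier T p \<xi> = poly P"
proof
  show "bezier T p \<xi> = poly (\<Sum>i\<le>p. smult (\<xi> i * real (p choose i)) ([:0, 1/T:]^i * [:1, -1/T:]^(p-i)))"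
    by (rule ext) (simp add: bezier_def bernstein_def poly_sum poly_power field_simps)
qed

lemma deriv_funpow_poly: "(deriv ^^ m) (poly P) = poly ((pderiv ^^ m) P)"
proof (induction m)
  case (Suc m)
  show ?case using Suc by (auto intro!: ext DERIV_imp_deriv)
qed simp

lemma vec_sum_axis: "(\<chi> i. h i) = (\<Sum>i\<in>UNIV. h i *\<^sub>R axis i (1::real))"
  by (simp add: vec_eq_iff sum_component axis_def if_distrib sum.delta cong: if_cong)

lemma vec_deriv:
  assumes "\<And>i. ((\<lambda>s. h i s) has_real_derivative h' i) (at t)"
  shows "((\<lambda>s. (\<chi> i. h i s)::(real,'n::finite) vec) has_vector_derivative (\<chi> i. h' i)) (at t)"
proof -
  have "((\<lambda>s. (\<Sum>i\<in>UNIV. h i s *\<^sub>R axis i (1::real))) has_vector_derivative (\<Sum>i\<in>UNIV. h' i *\<^sub>R axis i (1::real))) (at t)"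
  proof (rule has_vector_derivative_sum)
    fix i
    show "((\<lambda>s. h i s *\<^sub>R axis i (1::real)) has_vector_derivative h' i *\<^sub>R axis i (1::real)) (at t)"
      using has_vector_derivative_scaleR[OF assms has_vector_derivative_const] by simp
  qed
  then show ?thesis by (simp only: vec_sum_axis[symmetric])
qed

lemma pos_succ:
  fixes i :: "'n::{finite,linorder}"
  assumes "\<exists>j. i < j"
  shows "pos (LEAST j. i < j) = Suc (pos i)"
proof -
  let ?s = "LEAST j. i < j"
  have sm: "?s = Min {j. i < j}" by (rule Least_Min) (use assms in auto)
  have ii: "i < ?s" using assms unfolding sm by (subst Min_gr_iff) auto
  have le: "?s \<le> j" if "i < j" for j unfolding sm using that by (intro Min_le) auto
  have "{j. j < ?s} = insert i {j. j < i}"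
  proof (rule set_eqI, rule iffI)
    fix x assume "x \<in> {j. j < ?s}"
    then have "x < ?s" by simp
    then have "\<not> i < x" using le by (meson leD)
    then show "x \<in> insert i {j. j < i}" by auto
  next
    fix x assume "x \<in> insert i {j. j < i}"
    then show "x \<in> {j. j < ?s}" using ii by auto
  qed
  then show ?thesis unfolding pos_def by simp
qed


lemma poly_shift_deriv: "((\<lambda>s. poly Q (s - c)) has_real_derivative poly (pderiv Q) (t - c)) (at t)"
proof -
  have d: "((\<lambda>s. s - c) has_real_derivative 1) (at t)"
    by (auto intro!: derivative_eq_intros)
  have e: "(poly Q has_real_derivative poly (pderiv Q) (t - c)) (at ((\<lambda>s. s - c) t))"
    using poly_DERIV[of Q "t - c"] by simp
  show ?thesis using DERIV_chain2[OF e d] by simp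
qed

lemma C1_cont: "C1_fun f \<Longrightarrow> continuous_on UNIV f"
  unfolding C1_fun_def
  by (metis continuous_at_imp_continuous_on has_derivative_continuous)

theorem lemma2:
  fixes f g :: "(real,'n::{finite,linorder}) vec \<Rightarrow> real"
    and N :: nat and T t_lo :: real
    and x :: "nat \<Rightarrow> (real,'n) vec"
    and \<xi> :: "nat \<Rightarrow> nat \<Rightarrow> real"
    and xd :: "real \<Rightarrow> (real,'n) vec"
  assumes "C1_fun f" and "C1_fun g"
    and "f 0 = 0" and "\<forall>y. g y \<noteq> 0"
    and "T > 0" and "t_lo \<ge> 0"
    and bez0: "\<forall>k<N. \<forall>i. (deriv ^^ pos i) (bezier T (2 * CARD('n) - 1) (\<xi> k)) 0 = x k $ i"
    and bezT: "\<forall>k<N. \<forall>i. (deriv ^^ pos i) (bezier T (2 * CARD('n) - 1) (\<xi> k)) T = x (Suc k) $ i"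
    and xd_pieces: "\<forall>k<N. \<forall>t. t_lo + real k * T \<le> t \<and> t < t_lo + real (Suc k) * T \<longrightarrow>
        xd t = (\<chi> i. (deriv ^^ pos i) (bezier T (2 * CARD('n) - 1) (\<xi> k)) (t - (t_lo + real k * T)))"
    and xd_end: "xd (t_lo + real N * T) = x N"
  shows "dyn_admissible (sys_f f) (sys_g g) xd t_lo (t_lo + real N * T)"
proof -
  let ?p = "2 * CARD('n) - 1"
  have "\<forall>k. \<exists>Q. bezier T ?p (\<xi> k) = poly Q" using bezier_poly by blast
  then obtain P where P: "\<And>k. bezier T ?p (\<xi> k) = poly (P k)" by metis
  define tk where "tk k = t_lo + real k * T" for k
  define X :: "nat \<Rightarrow> real \<Rightarrow> (real,'n) vec" where
    "X k \<tau> = (\<chi> i. poly ((pderiv ^^ pos i) (P k)) \<tau>)" for k \<tau>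
  define X' :: "nat \<Rightarrow> real \<Rightarrow> (real,'n) vec" where
    "X' k \<tau> = (\<chi> i. poly ((pderiv ^^ Suc (pos i)) (P k)) \<tau>)" for k \<tau>
  define l :: 'n where "l = Max UNIV"
  have l: "j \<le> l" for j unfolding l_def by simp
  define D where "D k t = (poly ((pderiv ^^ Suc (pos l)) (P k)) (t - tk k) - f (X k (t - tk k)))
      / g (X k (t - tk k))" for k t
  define ud where "ud t = D (nat \<lfloor>(t - t_lo) / T\<rfloor>) t" for t
  have T: "T > 0" by fact
  have tk_mono: "tk i < tk j \<longleftrightarrow> i < j" for i j using T unfolding tk_def by simp
  have tk_le: "tk i \<le> tk j \<longleftrightarrow> i \<le> j" for i j using T unfolding tk_def by simp
  have tk_Suc: "tk (Suc k) - tk k = T" for k unfolding tk_def by (simp add: algebra_simps)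
  have X0: "X k 0 = x k" if "k < N" for k
    using bez0 that unfolding X_def P deriv_funpow_poly by (simp add: vec_eq_iff)
  have XT: "X k T = x (Suc k)" if "k < N" for k
    using bezT that unfolding X_def P deriv_funpow_poly by (simp add: vec_eq_iff)
  have F1: "xd t = X k (t - tk k)" if "k < N" "tk k \<le> t" "t \<le> tk (Suc k)" for k t
  proof (cases "t < tk (Suc k)")
    case True
    then show ?thesis using xd_pieces that unfolding X_def P deriv_funpow_poly tk_def by auto
  next
    case False
    then have t: "t = tk (Suc k)" using that by simp
    have "X k (t - tk k) = x (Suc k)" using t tk_Suc XT that by simp
    moreover have "xd t = x (Suc k)"
    proof (cases "Suc k < N")
      case True
      have "xd t = X (Suc k) (t - tk (Suc k))"
        using xd_pieces True t tk_mono[of "Suc k" "Suc (Suc k)"]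
        unfolding X_def P deriv_funpow_poly tk_def by auto
      then show ?thesis using t X0 True by simp
    next
      case False
      then have "Suc k = N" using that by simp
      then show ?thesis using xd_end t unfolding tk_def by simp
    qed
    ultimately show ?thesis by simp
  qed
  have F2: "((\<lambda>s. X k (s - c)) has_vector_derivative X' k (t - c)) (at t)" for k c t
    unfolding X_def X'_def by (rule vec_deriv) (simp add: poly_shift_deriv)
  have F3': "nat \<lfloor>(t - t_lo) / T\<rfloor> = k" if "tk k \<le> t" "t < tk (Suc k)" for k t
  proof -
    have "real k \<le> (t - t_lo) / T" "(t - t_lo) / T < real k + 1"
      using that T unfolding tk_def by (auto simp: field_simps)
    then have "\<lfloor>(t - t_lo) / T\<rfloor> = int k" by (simp add: floor_eq_iff)
    then show ?thesis by simp
  qed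
  define PS where "PS = tk ` {..N}"
  have F3: "\<exists>k<N. tk k < t \<and> t < tk (Suc k)" if "t \<in> {t_lo..tk N}" "t \<notin> PS" for t
  proof -
    define k where "k = nat \<lfloor>(t - t_lo) / T\<rfloor>"
    have q0: "0 \<le> (t - t_lo) / T" using that T by auto
    have "real k = of_int \<lfloor>(t - t_lo) / T\<rfloor>" unfolding k_def using q0 by simp
    then have k1: "real k \<le> (t - t_lo) / T" "(t - t_lo) / T < real k + 1"
      by linarith+
    have a: "tk k \<le> t" "t < tk (Suc k)"
      using k1 T unfolding tk_def by (auto simp: field_simps)
    have "k < N"
    proof (rule ccontr)
      assume "\<not> k < N"
      then have "tk N \<le> tk k" using tk_le by simp
      then have "t = tk N" using a that by simp
      then show False using that unfolding PS_def by auto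
    qed
    moreover have "tk k \<noteq> t" using that \<open>k < N\<close> unfolding PS_def by auto
    ultimately show ?thesis using a by auto
  qed
  have F4: "\<exists>k<N. s = tk k \<and> s' = tk (Suc k)" if "adjacent PS s s'" for s s'
  proof -
    from that obtain i j where ij: "i \<le> N" "j \<le> N" "s = tk i" "s' = tk j" "s < s'"
      "{s<..<s'} \<inter> PS = {}"
      unfolding adjacent_def PS_def by auto
    have "i < j" using ij tk_mono by simp
    have "j = Suc i"
    proof (rule ccontr)
      assume "j \<noteq> Suc i"
      then have "Suc i < j" using \<open>i < j\<close> by simp
      moreover have "tk i < tk (Suc i)" using tk_mono by simp
      moreover have "tk (Suc i) < tk j" using tk_mono \<open>Suc i < j\<close> by simp
      ultimately have "tk (Suc i) \<in> {s<..<s'} \<inter> PS"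
        using ij unfolding PS_def by auto
      then show False using ij by blast
    qed
    then have "i < N" "s = tk i" "s' = tk (Suc i)" using ij by auto
    then show ?thesis by blast
  qed
  have partition: "partition_of PS t_lo (t_lo + real N * T)"
    unfolding partition_of_def PS_def
  proof (intro conjI)
    show "tk ` {..N} \<subseteq> {t_lo..t_lo + real N * T}"
      using T unfolding tk_def by auto
    show "t_lo \<in> tk ` {..N}" using image_eqI[of t_lo tk 0] unfolding tk_def by simp
    show "t_lo + real N * T \<in> tk ` {..N}" unfolding tk_def by auto
  qed simp
  have fc: "continuous_on UNIV f" and gc: "continuous_on UNIV g"
    using C1_cont assms(1,2) by auto
  have Xc: "continuous_on S (\<lambda>t. X k (t - c))" for S k c
    unfolding X_def by (intro continuous_intros)
  have X'c: "continuous_on S (\<lambda>t. X' k (t - c))" for S k c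
    unfolding X'_def by (intro continuous_intros)
  have Dc: "continuous_on S (D k)" for S k
    unfolding D_def
    by (intro continuous_intros continuous_on_compose2[OF fc Xc] continuous_on_compose2[OF gc Xc])
       (use assms(4) in auto)
  have xdc: "continuous_on {t_lo..tk m} xd" if "m \<le> N" for m
    using that
  proof (induction m)
    case 0
    then show ?case by (simp add: tk_def)
  next
    case (Suc m)
    have "continuous_on {tk m..tk (Suc m)} xd"
      using Xc[of "{tk m..tk (Suc m)}" m "tk m"] F1[of m] Suc.prems
      by (auto intro: continuous_on_eq)
    moreover have "{t_lo..tk (Suc m)} = {t_lo..tk m} \<union> {tk m..tk (Suc m)}"
      using tk_le[of 0 m] tk_le[of m "Suc m"] unfolding tk_def by auto
    ultimately show ?case using Suc by (auto intro: continuous_on_closed_Un)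
  qed
  have "tk N = t_lo + real N * T" unfolding tk_def by simp
  note tkN = this
  show ?thesis
    unfolding dyn_admissible_def
  proof (intro conjI exI)
    show "piecewise_C1 xd t_lo (t_lo + real N * T)"
      unfolding piecewise_C1_def
    proof (rule conjI)
      show "continuous_on {t_lo..t_lo + real N * T} xd" using xdc[of N] tkN by simp
      have "partition_of PS t_lo (t_lo + real N * T) \<and> (\<forall>s s'. adjacent PS s s' \<longrightarrow>
        (\<exists>D. continuous_on {s..s'} D \<and> (\<forall>t\<in>{s<..<s'}. (xd has_vector_derivative D t) (at t))))"
      proof (intro conjI allI impI partition)
        fix s s' assume "adjacent PS s s'"
        then obtain k where k: "k < N" "s = tk k" "s' = tk (Suc k)" using F4 by blast
        show "\<exists>D. continuous_on {s..s'} D \<and> (\<forall>t\<in>{s<..<s'}. (xd has_vector_derivative D t) (at t))"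
        proof (intro exI conjI ballI)
          show "continuous_on {s..s'} (\<lambda>t. X' k (t - tk k))" by (rule X'c)
          fix t assume t: "t \<in> {s<..<s'}"
          show "(xd has_vector_derivative X' k (t - tk k)) (at t)"
            by (rule has_vector_derivative_transform_within_open[OF F2[of k "tk k" t], where S="{s<..<s'}"])
               (use t k F1 in auto)
        qed
      qed
      then show "\<exists>P. partition_of P t_lo (t_lo + real N * T) \<and> (\<forall>s s'. adjacent P s s' \<longrightarrow>
        (\<exists>D. continuous_on {s..s'} D \<and> (\<forall>t\<in>{s<..<s'}. (xd has_vector_derivative D t) (at t))))"
        by blast
    qed
    show "piecewise_cont ud t_lo (t_lo + real N * T)"
      unfolding piecewise_cont_def
    proof (intro exI[of _ PS] conjI allI impI partition)
      fix s s' assume "adjacent PS s s'"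
      then obtain k where k: "k < N" "s = tk k" "s' = tk (Suc k)" using F4 by blast
      show "\<exists>Df. continuous_on {s..s'} Df \<and> (\<forall>t\<in>{s<..<s'}. ud t = Df t)"
      proof (intro exI conjI ballI)
        show "continuous_on {s..s'} (D k)" by (rule Dc)
        fix t assume t: "t \<in> {s<..<s'}"
        show "ud t = D k t" unfolding ud_def using F3'[of k t] t k by auto
      qed
    qed
    have ae: "AE t in lborel. t \<notin> PS"
      by (rule AE_not_in, rule finite_imp_null_set_lborel) (simp add: PS_def)
    show "AE t in lborel. t \<in> {t_lo..t_lo + real N * T} \<longrightarrow>
        (xd has_vector_derivative (sys_f f (xd t) + ud t *\<^sub>R sys_g g (xd t))) (at t)"
    proof (rule eventually_mono[OF ae], intro impI)
      fix t assume tP: "t \<notin> PS" and tI: "t \<in> {t_lo..t_lo + real N * T}"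
      then obtain k where k: "k < N" "tk k < t" "t < tk (Suc k)" using F3 tkN by auto
      have der: "(xd has_vector_derivative X' k (t - tk k)) (at t)"
        by (rule has_vector_derivative_transform_within_open[OF F2[of k "tk k" t], where S="{tk k<..<tk (Suc k)}"])
           (use k F1 in auto)
      have xt: "xd t = X k (t - tk k)" using F1 k by simp
      have ut: "ud t = D k t" unfolding ud_def using F3'[of k t] k by simp
      have gne: "g (X k (t - tk k)) \<noteq> 0" using assms(4) by auto
      have "X' k (t - tk k) = sys_f f (xd t) + ud t *\<^sub>R sys_g g (xd t)"
        unfolding xt ut
      proof (subst vec_eq_iff, intro allI)
        fix i
        show "X' k (t - tk k) $ i = (sys_f f (X k (t - tk k)) + D k t *\<^sub>R sys_g g (X k (t - tk k))) $ i"
        proof (cases "\<exists>j. i < j")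
          case True
          then have "\<not> (\<forall>j. j \<le> i)" by (auto simp: not_le)
          then show ?thesis using True pos_succ[OF True]
            by (auto simp add: sys_f_def sys_g_def A0_def e_last_def X_def X'_def)
        next
          case False
          then have il: "i = l" using l[of i] by (auto simp: not_less intro: antisym)
          have "\<forall>j. j \<le> i" using False by (auto simp: not_less)
          then show ?thesis using False gne il
            by (auto simp add: sys_f_def sys_g_def A0_def e_last_def X_def X'_def D_def field_simps)
        qed
      qed
      then show "(xd has_vector_derivative (sys_f f (xd t) + ud t *\<^sub>R sys_g g (xd t))) (at t)"
        using der by simp
    qed
  qed
qed

end
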